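(* The following problem is decidable: given synchronized automata computing Fibonacci-synchronized sequences $(s(n))_{n\ge0}$ and $(s'(n))_{n\ge0}$, decide whether $(s'(n))$ is the distinctness transform of $(s(n))$.
   Context: $\mathbb{N}=\{0,1,2,\ldots\}$. The distinctness transform of a sequence $(s(n))_{n\ge0}$ over $\mathbb{N}$ is the sequence obtained by scanning $s(0),s(1),\ldots$ from left to right and deleting every term whose value already occurred earlier; equivalently it lists the distinct values of $s$, each once, in order of their first occurrence. The Fibonacci (Zeckendorf) representation of $n\in\mathbb{N}$ is the binary string $e_1\cdots e_t$ with no two consecutive $1$'s and $n=\sum_{i=1}^t e_iF_{t-i+2}$ (where $F_0=0,F_1=1,F_k=F_{k-1}+F_{k-2}$), leading zeros being allowed/ignored. A sequence $s:\mathbb{N}\to\mathbb{N}$ is Fibonacci-synchronized if there is a deterministic finite automaton (a synchronized automaton) over the alphabet $\{0,1\}^2$ which, reading the Fibonacci representations of a pair $(n,x)$ in parallel (most significant digit first, the shorter one padded with leading zeros), accepts if and only if $x=s(n)$. *)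

theory Defs
  imports Main "HOL-Library.Nat_Bijection" "HOL-Number_Theory.Fib" "HOL-Library.Infinite_Set"
begin

datatype recf =
    Zero
  | Succ
  | Proj nat
  | Comp recf "recf list"
  | PrimRec recf recf
  | Mu recf

inductive eval :: "recf \<Rightarrow> nat list \<Rightarrow> nat \<Rightarrow> bool" where
  eval_Zero: "eval Zero xs 0"
| eval_Succ: "eval Succ (x # xs) (Suc x)"
| eval_Proj: "i < length xs \<Longrightarrow> eval (Proj i) xs (xs ! i)"
| eval_Comp: "list_all2 (\<lambda>g y. eval g xs y) gs ys \<Longrightarrow> eval f ys z \<Longrightarrow> eval (Comp f gs) xs z"
| eval_PrimRec0: "eval g xs y \<Longrightarrow> eval (PrimRec g h) (0 # xs) y"
| eval_PrimRecS: "eval (PrimRec g h) (n # xs) y \<Longrightarrow> eval h (n # y # xs) z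
      \<Longrightarrow> eval (PrimRec g h) (Suc n # xs) z"
| eval_Mu: "eval f (n # xs) 0 \<Longrightarrow> (\<forall>m<n. \<exists>y. eval f (m # xs) (Suc y))
      \<Longrightarrow> eval (Mu f) xs n"
monos list_all2_mono

fun fibval :: "nat list \<Rightarrow> nat" where
  "fibval [] = 0"
| "fibval (e # es) = e * fib (length es + 2) + fibval es"

text \<open>Valid Fibonacci representation (leading zeros allowed): binary, no two consecutive 1s.\<close>
definition fib_word :: "nat list \<Rightarrow> bool" where
  "fib_word w \<longleftrightarrow> (\<forall>e\<in>set w. e \<le> 1) \<and>
     (\<forall>i. Suc i < length w \<longrightarrow> \<not> (w ! i = 1 \<and> w ! Suc i = 1))"

text \<open>A DFA is (number of states Q, initial state, transition table, final states).
  States are 0..Q-1; the letter (a,b) in {0,1}^2 is coded as 2a+b in {0,..,3};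
  the transition from state q on letter c is the table entry at index 4q+c.\<close>
type_synonym dfa = "nat \<times> nat \<times> nat list \<times> nat list"

definition wf_dfa :: "dfa \<Rightarrow> bool" where
  "wf_dfa A = (case A of (Q, q0, d, F) \<Rightarrow>
     0 < Q \<and> q0 < Q \<and> length d = 4 * Q \<and> (\<forall>x\<in>set d. x < Q) \<and> (\<forall>x\<in>set F. x < Q))"

fun run :: "nat list \<Rightarrow> nat \<Rightarrow> nat list \<Rightarrow> nat" where
  "run d q [] = q"
| "run d q (c # w) = run d (d ! (4 * q + c)) w"

definition accepts :: "dfa \<Rightarrow> nat list \<Rightarrow> bool" where
  "accepts A w = (case A of (Q, q0, d, F) \<Rightarrow> run d q0 w \<in> set F)"

definition pair_word :: "nat list \<Rightarrow> nat list \<Rightarrow> nat list" where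
  "pair_word u v = map2 (\<lambda>a b. 2 * a + b) u v"

definition synchronized :: "dfa \<Rightarrow> (nat \<Rightarrow> nat) \<Rightarrow> bool" where
  "synchronized A s \<longleftrightarrow> wf_dfa A \<and>
     (\<forall>u v. length u = length v \<and> fib_word u \<and> fib_word v \<longrightarrow>
        (accepts A (pair_word u v) \<longleftrightarrow> fibval v = s (fibval u)))"

definition code_dfa :: "dfa \<Rightarrow> nat" where
  "code_dfa A = (case A of (Q, q0, d, F) \<Rightarrow>
     prod_encode (Q, prod_encode (q0, prod_encode (list_encode d, list_encode F))))"

definition first_occ :: "(nat \<Rightarrow> nat) \<Rightarrow> nat set" where
  "first_occ s = {m. \<forall>k<m. s k \<noteq> s m}"

text \<open>If s takes only finitely many values, its
  distinctness transform is finite and hence no infinite sequence s' equals it.\<close>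
definition is_distinctness_transform :: "(nat \<Rightarrow> nat) \<Rightarrow> (nat \<Rightarrow> nat) \<Rightarrow> bool" where
  "is_distinctness_transform s s' \<longleftrightarrow>
     infinite (first_occ s) \<and> (\<forall>n. s' n = s (enumerate (first_occ s) n))"

end

theory Submission
  imports Defs
begin


datatype pexp = V nat | Cn nat | Add pexp pexp | Sub pexp pexp | Mul pexp pexp | Rec pexp pexp pexp

fun sem :: "pexp \<Rightarrow> nat list \<Rightarrow> nat" where
  "sem (V i) env = (if i < length env then env ! i else 0)"
| "sem (Cn n) env = n"
| "sem (Add a b) env = sem a env + sem b env"
| "sem (Sub a b) env = sem a env - sem b env"
| "sem (Mul a b) env = sem a env * sem b env"
| "sem (Rec n z st) env = rec_nat (sem z env) (\<lambda>t acc. sem st (t # acc # env)) (sem n env)"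

lemma eval_Proj': "i < length xs \<Longrightarrow> y = xs ! i \<Longrightarrow> eval (Proj i) xs y"
  by (auto intro: eval_Proj)

definition addR :: recf where "addR = PrimRec (Proj 0) (Comp Succ [Proj 1])"
definition mulR :: recf where "mulR = PrimRec Zero (Comp addR [Proj 1, Proj 2])"
definition predR :: recf where "predR = PrimRec Zero (Proj 0)"
definition subR :: recf where "subR = PrimRec (Proj 0) (Comp predR [Proj 1])"

lemma eval_addR: "eval addR [x, y] (x + y)"
proof (induction x)
  case 0 then show ?case unfolding addR_def by (auto intro!: eval.intros eval_Proj')
next
  case (Suc x)
  have "eval (Comp Succ [Proj 1]) [x, x + y, y] (Suc (x + y))"
    by (rule eval_Comp[where ys="[x+y]"]) (auto intro!: eval.intros eval_Proj')
  then show ?case using Suc unfolding addR_def by (auto intro: eval_PrimRecS)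
qed

lemma eval_mulR: "eval mulR [x, y] (x * y)"
proof (induction x)
  case 0 then show ?case unfolding mulR_def by (auto intro!: eval.intros)
next
  case (Suc x)
  have "eval (Comp addR [Proj 1, Proj 2]) [x, x * y, y] (x * y + y)"
    by (rule eval_Comp[where ys="[x*y, y]"]) (auto intro!: eval.intros eval_addR eval_Proj')
  then show ?case using Suc unfolding mulR_def by (auto intro: eval_PrimRecS simp: add.commute)
qed

lemma eval_predR: "eval predR [x] (x - 1)"
proof (induction x)
  case 0 then show ?case unfolding predR_def by (auto intro!: eval.intros)
next
  case (Suc n)
  then show ?case unfolding predR_def
    by (auto intro!: eval_PrimRecS eval_Proj')
qed

lemma eval_subR: "eval subR [y, x] (x - y)"
proof (induction y)
  case 0 then show ?case unfolding subR_def by (auto intro!: eval.intros eval_Proj')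
next
  case (Suc y)
  have "eval (Comp predR [Proj 1]) [y, x - y, x] (x - y - 1)"
    by (rule eval_Comp[where ys="[x - y]"]) (use eval_predR[of "x-y"] in \<open>auto intro: eval_Proj'\<close>)
  then have "eval (Comp predR [Proj 1]) [y, x - y, x] (x - Suc y)" by simp
  then show ?case using Suc unfolding subR_def by (auto intro: eval_PrimRecS)
qed

primrec cnR :: "nat \<Rightarrow> recf" where
  "cnR 0 = Zero" | "cnR (Suc n) = Comp Succ [cnR n]"

lemma eval_cnR: "eval (cnR n) env n"
  by (induction n) (auto intro!: eval_Comp[where ys="[n]" for n] eval.intros)

fun pcomp :: "nat \<Rightarrow> pexp \<Rightarrow> recf" where
  "pcomp k (V i) = (if i < k then Proj i else Zero)"
| "pcomp k (Cn n) = cnR n"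
| "pcomp k (Add a b) = Comp addR [pcomp k a, pcomp k b]"
| "pcomp k (Sub a b) = Comp subR [pcomp k b, pcomp k a]"
| "pcomp k (Mul a b) = Comp mulR [pcomp k a, pcomp k b]"
| "pcomp k (Rec n z st) = Comp (PrimRec (pcomp k z) (pcomp (k+2) st)) (pcomp k n # map Proj [0..<k])"

lemma projs_all2: "list_all2 (\<lambda>g y. eval g env y) (map Proj [0..<length env]) env"
  by (auto simp: list_all2_conv_all_nth intro: eval_Proj)

lemma pcomp_correct: "length env = k \<Longrightarrow> eval (pcomp k e) env (sem e env)"
proof (induction k e arbitrary: env rule: pcomp.induct)
  case (1 k i) then show ?case by (auto intro: eval.intros)
next
  case (2 k) then show ?case by (auto intro: eval_cnR)
next
  case (3 k a b) then show ?case by (auto intro!: eval_Comp[where ys="[sem a env, sem b env]"] eval_addR)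
next
  case (4 k a b) then show ?case by (auto intro!: eval_Comp[where ys="[sem b env, sem a env]"] eval_subR)
next
  case (5 k a b) then show ?case by (auto intro!: eval_Comp[where ys="[sem a env, sem b env]"] eval_mulR)
next
  case (6 k n z st)
  have R: "eval (PrimRec (pcomp k z) (pcomp (k+2) st)) (t # env)
       (rec_nat (sem z env) (\<lambda>t acc. sem st (t # acc # env)) t)" for t
  proof (induction t)
    case 0 then show ?case using 6 by (auto intro: eval_PrimRec0)
  next
    case (Suc t) then show ?case using 6 by (auto intro: eval_PrimRecS)
  qed
  show ?case unfolding pcomp.simps sem.simps
    by (rule eval_Comp[where ys="sem n env # env"]) (use 6 R projs_all2[of env] in auto)
qed


fun shf :: "nat \<Rightarrow> nat \<Rightarrow> pexp \<Rightarrow> pexp" where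
  "shf c d (V i) = (if i < c then V i else V (i + d))"
| "shf c d (Cn n) = Cn n"
| "shf c d (Add a b) = Add (shf c d a) (shf c d b)"
| "shf c d (Sub a b) = Sub (shf c d a) (shf c d b)"
| "shf c d (Mul a b) = Mul (shf c d a) (shf c d b)"
| "shf c d (Rec n z st) = Rec (shf c d n) (shf c d z) (shf (c+2) d st)"

lemma sem_shf: "length pre = c \<Longrightarrow> length xs = d \<Longrightarrow>
   sem (shf c d e) (pre @ xs @ env) = sem e (pre @ env)"
proof (induction c d e arbitrary: pre rule: shf.induct)
  case (1 c d i) then show ?case by (auto simp: nth_append)
next
  case (6 c d n z st)
  have "sem (shf (c+2) d st) (t # a # pre @ xs @ env) = sem st (t # a # pre @ env)" for t a
    using 6(3)[of "t # a # pre"] 6(4,5) by simp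
  then show ?case using 6 by simp
qed simp_all

definition "lift1 e = shf 0 1 e"
definition "lift2 e = shf 0 2 e"
definition "sh11 e = shf 1 1 e"
lemma sem_shf01[simp]: "sem (lift1 e) (x # env) = sem e env"
  using sem_shf[of "[]" 0 "[x]" 1 e env] by (simp add: lift1_def)
lemma sem_shf02[simp]: "sem (lift2 e) (x # y # env) = sem e env"
  using sem_shf[of "[]" 0 "[x,y]" 2 e env] by (simp add: lift2_def)
lemma sem_shf11[simp]: "sem (sh11 e) (x # y # env) = sem e (x # env)"
  using sem_shf[of "[x]" 1 "[y]" 1 e env] by (simp add: sh11_def)

definition sgE where "sgE e = Sub (Cn 1) (Sub (Cn 1) e)"
lemma sem_sgE[simp]: "sem (sgE e) env = (if sem e env = 0 then 0 else 1)"
  by (simp add: sgE_def)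
definition iszE where "iszE e = Sub (Cn 1) e"
lemma sem_iszE[simp]: "sem (iszE e) env = (if sem e env = 0 then 1 else 0)"
  by (simp add: iszE_def)
definition leE where "leE a b = iszE (Sub a b)"
lemma sem_leE[simp]: "sem (leE a b) env = (if sem a env \<le> sem b env then 1 else 0)"
  by (simp add: leE_def)
definition eqE where "eqE a b = Mul (leE a b) (leE b a)"
lemma sem_eqE[simp]: "sem (eqE a b) env = (if sem a env = sem b env then 1 else 0)"
  by (simp add: eqE_def)
definition iteE where "iteE c a b = Add (Mul (sgE c) a) (Mul (iszE c) b)"
lemma sem_iteE[simp]: "sem (iteE c a b) env = (if sem c env \<noteq> 0 then sem a env else sem b env)"
  by (simp add: iteE_def)

definition bsum where "bsum n f = Rec n (Cn 0) (Add (V 1) (sh11 f))"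
lemma sem_bsum[simp]: "sem (bsum n f) env = (\<Sum>i<sem n env. sem f (i # env))"
proof -
  have "rec_nat 0 (\<lambda>t acc. sem (Add (V 1) (sh11 f)) (t # acc # env)) m = (\<Sum>i<m. sem f (i # env))" for m
    by (induction m) auto
  then show ?thesis by (simp add: bsum_def)
qed
definition bex where "bex n f = sgE (bsum n f)"
lemma sem_bex[simp]: "sem (bex n f) env = (if \<exists>i<sem n env. sem f (i # env) \<noteq> 0 then 1 else 0)"
  by (simp add: bex_def)

definition triE where "triE e = bsum (Add e (Cn 1)) (V 0)"
lemma sem_triE[simp]: "sem (triE e) env = triangle (sem e env)"
proof -
  have "(\<Sum>i<Suc m. i) = triangle m" for m by (induction m) auto
  then show ?thesis by (simp add: triE_def)
qed
definition peE where "peE a b = Add (triE (Add a b)) a"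
lemma sem_peE[simp]: "sem (peE a b) env = prod_encode (sem a env, sem b env)"
  by (simp add: peE_def prod_encode_def)

definition pdfE where "pdfE z = bsum (Add z (Cn 1))
   (Mul (V 0) (bex (Add (lift1 z) (Cn 1)) (eqE (peE (V 1) (V 0)) (lift2 z))))"
definition pdsE where "pdsE z = bsum (Add z (Cn 1))
   (Mul (V 0) (bex (Add (lift1 z) (Cn 1)) (eqE (peE (V 0) (V 1)) (lift2 z))))"

lemma sum_single0: "(\<Sum>i<(n::nat). if i = a then f i else 0) = (if a < n then f a else 0 :: nat)"
  by (induction n) auto
lemma sum_single: "a < (n::nat) \<Longrightarrow> (\<Sum>i<n. if i = a then f i else 0) = (f a :: nat)"
  by (simp add: sum_single0)

lemma sem_pdfE[simp]: "sem (pdfE z) env = fst (prod_decode (sem z env))"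
proof -
  define x where "x = sem z env"
  obtain a b where ab: "prod_decode x = (a, b)" by fastforce
  have e: "prod_encode (a, b) = x" using ab by (metis prod_decode_inverse)
  have le: "a < Suc x" "b < Suc x" using le_prod_encode_1[of a b] le_prod_encode_2[of b a] e by auto
  have key: "(\<exists>n<Suc x. prod_encode (m, n) = x) \<longleftrightarrow> m = a" for m
    using e le by (metis Pair_inject prod_encode_eq)
  have "sem (pdfE z) env = (\<Sum>m<x+1. sem (Mul (V 0) (bex (Add (lift1 z) (Cn 1)) (eqE (peE (V 1) (V 0)) (lift2 z)))) (m # env))"
    by (simp only: pdfE_def sem_bsum sem.simps x_def)
  also have "\<dots> = (\<Sum>m<Suc x. if m = a then m else 0)"
    by (rule sum.cong) (auto simp: key[symmetric] x_def)
  also have "\<dots> = a" using le by (simp add: sum_single)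
  finally show ?thesis by (simp add: x_def[symmetric] ab)
qed

lemma sem_pdsE[simp]: "sem (pdsE z) env = snd (prod_decode (sem z env))"
proof -
  define x where "x = sem z env"
  obtain a b where ab: "prod_decode x = (a, b)" by fastforce
  have e: "prod_encode (a, b) = x" using ab by (metis prod_decode_inverse)
  have le: "a < Suc x" "b < Suc x" using le_prod_encode_1[of a b] le_prod_encode_2[of b a] e by auto
  have key: "(\<exists>n<Suc x. prod_encode (n, m) = x) \<longleftrightarrow> m = b" for m
    using e le by (metis Pair_inject prod_encode_eq)
  have "sem (pdsE z) env = (\<Sum>m<x+1. sem (Mul (V 0) (bex (Add (lift1 z) (Cn 1)) (eqE (peE (V 0) (V 1)) (lift2 z)))) (m # env))"
    by (simp only: pdsE_def sem_bsum sem.simps x_def)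
  also have "\<dots> = (\<Sum>m<Suc x. if m = b then m else 0)"
    by (rule sum.cong) (auto simp: key[symmetric] x_def)
  also have "\<dots> = b" using le by (simp add: sum_single)
  finally show ?thesis by (simp add: x_def[symmetric] ab)
qed

definition fibpE where "fibpE n = Rec n (peE (Cn 0) (Cn 1))
   (peE (pdsE (V 1)) (Add (pdfE (V 1)) (pdsE (V 1))))"
definition fibE where "fibE n = pdfE (fibpE n)"
lemma sem_fibE[simp]: "sem (fibE n) env = fib (sem n env)"
proof -
  have "rec_nat (prod_encode (0, 1)) (\<lambda>t acc. sem (peE (pdsE (V 1)) (Add (pdfE (V 1)) (pdsE (V 1)))) (t # acc # env)) m
     = prod_encode (fib m, fib (Suc m))" for m
    by (induction m) auto
  then show ?thesis by (simp add: fibE_def fibpE_def)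
qed

definition pow2E where "pow2E e = Rec e (Cn 1) (Mul (V 1) (Cn 2))"
lemma sem_pow2E[simp]: "sem (pow2E e) env = 2 ^ sem e env"
proof -
  have "rec_nat 1 (\<lambda>t acc. sem (Mul (V 1) (Cn 2)) (t # acc # env)) m = 2 ^ m" for m
    by (induction m) auto
  then show ?thesis by (simp add: pow2E_def)
qed

definition tl_code :: "nat \<Rightarrow> nat" where "tl_code c = snd (prod_decode (c - 1))"
definition hd_code :: "nat \<Rightarrow> nat" where "hd_code c = fst (prod_decode (c - 1))"

lemma tl_code_enc: "tl_code (list_encode xs) = list_encode (tl xs)"
proof (cases xs)
  case Nil then show ?thesis by (simp add: tl_code_def prod_decode_def prod_decode_aux.simps[of 0 0])
qed (simp add: tl_code_def)
lemma hd_code_enc: "xs \<noteq> [] \<Longrightarrow> hd_code (list_encode xs) = hd xs"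
  by (cases xs) (auto simp: hd_code_def)
lemma tl_code_pow: "(tl_code ^^ i) (list_encode xs) = list_encode (drop i xs)"
  by (induction i) (auto simp: tl_code_enc drop_Suc tl_drop)

lemma length_le_enc: "length xs \<le> list_encode xs"
proof (induction xs)
  case (Cons x xs) then show ?case using le_prod_encode_2[of "list_encode xs" x] by simp
qed simp

definition tlcE where "tlcE e = pdsE (Sub e (Cn 1))"
definition hdcE where "hdcE e = pdfE (Sub e (Cn 1))"
lemma sem_tlcE[simp]: "sem (tlcE e) env = tl_code (sem e env)" by (simp add: tlcE_def tl_code_def)
lemma sem_hdcE[simp]: "sem (hdcE e) env = hd_code (sem e env)" by (simp add: hdcE_def hd_code_def)

definition tailE where "tailE i c = Rec i c (tlcE (V 1))"
lemma sem_tailE[simp]: "sem (tailE i c) env = (tl_code ^^ sem i env) (sem c env)"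
proof -
  have "rec_nat x (\<lambda>t acc. sem (tlcE (V 1)) (t # acc # env)) m = (tl_code ^^ m) x" for m x
    by (induction m) auto
  then show ?thesis by (simp add: tailE_def)
qed

definition nthE where "nthE i c = hdcE (tailE i c)"
lemma sem_nthE: "sem (nthE i c) env = hd_code ((tl_code ^^ sem i env) (sem c env))"
  by (simp add: nthE_def)
lemma nth_code: "i < length xs \<Longrightarrow> hd_code ((tl_code ^^ i) (list_encode xs)) = xs ! i"
  by (simp add: tl_code_pow hd_code_enc hd_drop_conv_nth)

definition memE where "memE q c = bex (Add c (Cn 1))
   (Mul (sgE (tailE (V 0) (lift1 c))) (eqE (hdcE (tailE (V 0) (lift1 c))) (lift1 q)))"

definition mem_code :: "nat \<Rightarrow> nat \<Rightarrow> bool" where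
  "mem_code q c \<longleftrightarrow> (\<exists>i<c+1. (tl_code ^^ i) c \<noteq> 0 \<and> hd_code ((tl_code ^^ i) c) = q)"
lemma sem_memE[simp]: "sem (memE q c) env = (if mem_code (sem q env) (sem c env) then 1 else 0)"
  unfolding memE_def mem_code_def by auto

lemma enc0: "list_encode ys = 0 \<longleftrightarrow> ys = []" by (cases ys) auto

lemma mem_code_enc: "mem_code q (list_encode xs) \<longleftrightarrow> q \<in> set xs"
proof -
  have len: "(tl_code ^^ i) (list_encode xs) \<noteq> 0 \<longleftrightarrow> i < length xs" for i
    by (simp add: tl_code_pow enc0 not_le)
  show ?thesis
  proof
    assume "mem_code q (list_encode xs)"
    then obtain i where "(tl_code ^^ i) (list_encode xs) \<noteq> 0" "hd_code ((tl_code ^^ i) (list_encode xs)) = q"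
      unfolding mem_code_def by blast
    then have "i < length xs" "xs ! i = q" using len nth_code by auto
    then show "q \<in> set xs" by auto
  next
    assume "q \<in> set xs"
    then obtain i where i: "i < length xs" "xs ! i = q" by (auto simp: in_set_conv_nth)
    then have "i < list_encode xs + 1" using length_le_enc[of xs] by linarith
    then show "mem_code q (list_encode xs)" unfolding mem_code_def using i len nth_code by blast
  qed
qed


lemma fib_word_Nil[simp]: "fib_word []" by (simp add: fib_word_def)

lemma fib_word_Cons: "fib_word (x # w) \<longleftrightarrow> x \<le> 1 \<and> fib_word w \<and> \<not> (x = 1 \<and> w \<noteq> [] \<and> hd w = 1)"
proof
  assume a: "fib_word (x # w)"
  have "x \<le> 1" using a by (simp add: fib_word_def)
  moreover have "fib_word w"
    unfolding fib_word_def
  proof (intro conjI allI impI)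
    show "\<forall>e\<in>set w. e \<le> 1" using a by (simp add: fib_word_def)
    fix i assume "Suc i < length w"
    then show "\<not> (w ! i = 1 \<and> w ! Suc i = 1)" using a unfolding fib_word_def
      by (metis Suc_less_eq length_Cons nth_Cons_Suc)
  qed
  moreover have "\<not> (x = 1 \<and> w \<noteq> [] \<and> hd w = 1)"
  proof
    assume b: "x = 1 \<and> w \<noteq> [] \<and> hd w = 1"
    then have "Suc 0 < length (x # w)" by simp
    then show False using a b unfolding fib_word_def by (auto simp: hd_conv_nth)
  qed
  ultimately show "x \<le> 1 \<and> fib_word w \<and> \<not> (x = 1 \<and> w \<noteq> [] \<and> hd w = 1)" by blast
next
  assume a: "x \<le> 1 \<and> fib_word w \<and> \<not> (x = 1 \<and> w \<noteq> [] \<and> hd w = 1)"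
  show "fib_word (x # w)" unfolding fib_word_def
  proof (intro conjI allI impI)
    show "\<forall>e\<in>set (x # w). e \<le> 1" using a by (auto simp: fib_word_def)
    fix i assume i: "Suc i < length (x # w)"
    show "\<not> ((x # w) ! i = 1 \<and> (x # w) ! Suc i = 1)"
    proof (cases i)
      case 0 then show ?thesis using a i by (auto simp: hd_conv_nth)
    next
      case (Suc j) then show ?thesis using a i unfolding fib_word_def by auto
    qed
  qed
qed

lemma fib_word_append: "fib_word (a @ b) \<longleftrightarrow> fib_word a \<and> fib_word b \<and> \<not> (a \<noteq> [] \<and> b \<noteq> [] \<and> last a = 1 \<and> hd b = 1)"
  by (induction a) (auto simp: fib_word_Cons)

lemma fib_word_digit: "fib_word w \<Longrightarrow> e \<in> set w \<Longrightarrow> e \<le> 1"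
  by (simp add: fib_word_def)

lemma fibval_lt: "fib_word w \<Longrightarrow> fibval w < fib (length w + 2)"
proof (induction "length w" arbitrary: w rule: less_induct)
  case less
  show ?case
  proof (cases w)
    case Nil then show ?thesis by simp
  next
    case (Cons x w')
    have x: "x \<le> 1" and fw': "fib_word w'" using less.prems Cons by (auto simp: fib_word_Cons)
    show ?thesis
    proof (cases "x = 0")
      case True
      have "fibval w' < fib (length w' + 2)" using less Cons fw' by auto
      also have "\<dots> \<le> fib (length w + 2)" using Cons by (auto intro: fib_mono)
      finally show ?thesis using True Cons by simp
    next
      case False
      then have x1: "x = 1" using x by simp
      show ?thesis
      proof (cases w')
        case Nil then show ?thesis using Cons x1 by (simp add: numeral_eq_Suc)
      next
        case (Cons y w'')
        have "y = 0" using less.prems \<open>w = x # w'\<close> x1 Cons by (auto simp: fib_word_Cons)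
        have fw'': "fib_word w''" using fw' Cons by (simp add: fib_word_Cons)
        have "fibval w'' < fib (length w'' + 2)" using less fw'' \<open>w = x # w'\<close> Cons by auto
        then have "fibval w < fib (length w'' + 3) + fib (length w'' + 2)"
          using \<open>w = x # w'\<close> Cons x1 \<open>y = 0\<close> by (simp add: numeral_eq_Suc)
        also have "\<dots> = fib (length w + 2)" using \<open>w = x # w'\<close> Cons by (simp add: numeral_eq_Suc)
        finally show ?thesis .
      qed
    qed
  qed
qed

lemma fibval_zeros[simp]: "fibval (replicate j 0 @ w) = fibval w"
  by (induction j) auto

lemma fib_word_zeros[simp]: "fib_word (replicate j 0 @ w) \<longleftrightarrow> fib_word w"
  by (induction j) (auto simp: fib_word_Cons)

lemma fibval_app_ge: "fibval (1 # w) \<ge> fib (length w + 2)" by simp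

lemma fibval_lex: "length a1 = length a2 \<Longrightarrow> length b1 = length b2 \<Longrightarrow>
   fib_word (a1 @ b1) \<Longrightarrow> fib_word (a2 @ b2) \<Longrightarrow>
   fibval (a1 @ b1) < fibval (a2 @ b2) \<longleftrightarrow> fibval a1 < fibval a2 \<or> (a1 = a2 \<and> fibval b1 < fibval b2)"
proof (induction a1 a2 rule: list_induct2)
  case Nil then show ?case by simp
next
  case (Cons x a1 y a2)
  have fx: "x \<le> 1" "fib_word (a1 @ b1)" and fy: "y \<le> 1" "fib_word (a2 @ b2)"
    using Cons.prems by (auto simp: fib_word_Cons)
  have fa1: "fib_word a1" and fa2: "fib_word a2" using fx fy by (auto simp: fib_word_append)
  have l: "length (a1 @ b1) = length (a2 @ b2)" using Cons by simp
  show ?case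
  proof (cases "x = y")
    case True
    then show ?thesis using Cons.IH[OF Cons.prems(1) fx(2) fy(2)] l Cons.hyps by auto
  next
    case False
    then have "(x = 0 \<and> y = 1) \<or> (x = 1 \<and> y = 0)" using fx fy by auto
    then show ?thesis
    proof
      assume xy: "x = 0 \<and> y = 1"
      have "fibval (a1 @ b1) < fib (length (a1 @ b1) + 2)" by (rule fibval_lt[OF fx(2)])
      moreover have "fibval a1 < fib (length a1 + 2)" by (rule fibval_lt[OF fa1])
      ultimately show ?thesis using xy l Cons.hyps by auto
    next
      assume xy: "x = 1 \<and> y = 0"
      have "fibval (a2 @ b2) < fib (length (a2 @ b2) + 2)" by (rule fibval_lt[OF fy(2)])
      moreover have "fibval a2 < fib (length a2 + 2)" by (rule fibval_lt[OF fa2])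
      ultimately show ?thesis using xy l Cons.hyps by auto
    qed
  qed
qed

lemma fibval_inj: "length a1 = length a2 \<Longrightarrow> fib_word a1 \<Longrightarrow> fib_word a2 \<Longrightarrow> fibval a1 = fibval a2 \<longleftrightarrow> a1 = a2"
proof (induction a1 a2 rule: list_induct2)
  case (Cons x a1 y a2)
  have fx: "x \<le> 1" "fib_word a1" and fy: "y \<le> 1" "fib_word a2"
    using Cons.prems by (auto simp: fib_word_Cons)
  show ?case
  proof (cases "x = y")
    case True then show ?thesis using Cons fx fy by auto
  next
    case False
    then have "(x = 0 \<and> y = 1) \<or> (x = 1 \<and> y = 0)" using fx fy by auto
    moreover have "fibval a1 < fib (length a1 + 2)" "fibval a2 < fib (length a2 + 2)"
      using fibval_lt fx fy by auto
    ultimately show ?thesis using Cons.hyps False by auto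
  qed
qed simp

fun rep :: "nat \<Rightarrow> nat \<Rightarrow> nat list" where
  "rep 0 n = []"
| "rep (Suc L) n = (if fib (L + 2) \<le> n then 1 # rep L (n - fib (L + 2)) else 0 # rep L n)"

lemma length_rep[simp]: "length (rep L n) = L"
  by (induction L arbitrary: n) auto

lemma rep_ok: "n < fib (L + 2) \<Longrightarrow> fib_word (rep L n) \<and> fibval (rep L n) = n \<and>
    (rep L n \<noteq> [] \<and> hd (rep L n) = 1 \<longrightarrow> fib (L + 1) \<le> n)"
proof (induction L arbitrary: n)
  case 0 then show ?case by simp
next
  case (Suc L)
  show ?case
  proof (cases "fib (L + 2) \<le> n")
    case True
    have n': "n - fib (L + 2) < fib (L + 1)" using Suc.prems True
      by (simp add: numeral_eq_Suc)
    then have n'': "n - fib (L + 2) < fib (L + 2)" using fib_mono[of "L+1" "L+2"] by simp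
    note IH = Suc.IH[OF n'']
    then show ?thesis using True n' by (auto simp: fib_word_Cons)
  next
    case False
    then show ?thesis using Suc.IH[of n] by (auto simp: fib_word_Cons)
  qed
qed

lemma n_lt_fib: "n < fib (n + 2)"
proof (induction n)
  case (Suc n)
  have "fib (Suc n + 2) = fib (n + 2) + fib (n + 1)" by (simp add: numeral_eq_Suc)
  moreover have "fib (n + 1) > 0" by (simp add: fib_neq_0_nat)
  ultimately show ?case using Suc by simp
qed simp


type_synonym word = "nat list list"

definition track :: "nat \<Rightarrow> word \<Rightarrow> nat list" where "track i w = map (\<lambda>l. l ! i) w"
definition good :: "nat \<Rightarrow> word \<Rightarrow> bool" where
  "good k w \<longleftrightarrow> (\<forall>l\<in>set w. length l = k) \<and> (\<forall>i<k. fib_word (track i w))"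
definition vals :: "nat \<Rightarrow> word \<Rightarrow> nat list" where "vals k w = map (\<lambda>i. fibval (track i w)) [0..<k]"
definition rq :: "word set \<Rightarrow> word \<Rightarrow> word set" where "rq L u = {w. u @ w \<in> L}"
definition cls :: "nat \<Rightarrow> word set \<Rightarrow> word set set" where "cls k L = rq L ` {u. good k u}"
definition reg :: "nat \<Rightarrow> word set \<Rightarrow> nat \<Rightarrow> bool" where
  "reg k L N \<longleftrightarrow> finite (cls k L) \<and> card (cls k L) \<le> N"
definition Good :: "nat \<Rightarrow> word set" where "Good k = {w. good k w}"
definition Letters :: "nat \<Rightarrow> nat list set" where "Letters k = {l. set l \<subseteq> {0,1} \<and> length l = k}"

lemma track_append[simp]: "track i (u @ w) = track i u @ track i w" by (simp add: track_def)
lemma length_track[simp]: "length (track i w) = length w" by (simp add: track_def)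
lemma track_Nil[simp]: "track i [] = []" by (simp add: track_def)
lemma length_vals[simp]: "length (vals k w) = k" by (simp add: vals_def)
lemma nth_vals[simp]: "i < k \<Longrightarrow> vals k w ! i = fibval (track i w)" by (simp add: vals_def)

lemma good_append: "good k (u @ w) \<longleftrightarrow> good k u \<and> good k w \<and>
   (\<forall>i<k. \<not> (u \<noteq> [] \<and> w \<noteq> [] \<and> last u ! i = 1 \<and> hd w ! i = 1))"
  unfolding good_def by (auto simp: fib_word_append track_def last_map hd_map)

lemma good_appendD: "good k (u @ w) \<Longrightarrow> good k u \<and> good k w"
  by (simp add: good_append)

lemma good_take: "good k v \<Longrightarrow> good k (take i v)"
  using good_appendD[of k "take i v" "drop i v"] by simp
lemma good_drop: "good k v \<Longrightarrow> good k (drop i v)"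
  using good_appendD[of k "take i v" "drop i v"] by simp

lemma good_digit: "good k u \<Longrightarrow> l \<in> set u \<Longrightarrow> i < k \<Longrightarrow> l ! i \<le> 1"
  unfolding good_def track_def by (auto simp: fib_word_def)

lemma good_last_letter: "good k u \<Longrightarrow> u \<noteq> [] \<Longrightarrow> last u \<in> Letters k"
proof -
  assume g: "good k u" and ne: "u \<noteq> []"
  have ls: "last u \<in> set u" using ne by simp
  then have len: "length (last u) = k" using g by (auto simp: good_def)
  have "e \<in> {0,1}" if "e \<in> set (last u)" for e
  proof -
    have "\<exists>i<length (last u). last u ! i = e" using that by (simp add: in_set_conv_nth)
    then obtain i where "i < length (last u)" "last u ! i = e" by blast
    then have "e \<le> 1" using good_digit[OF g ls] len by auto
    then show ?thesis by auto
  qed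
  then show ?thesis unfolding Letters_def using len by blast
qed

lemma good_single: "l \<in> Letters k \<Longrightarrow> good k [l]"
proof -
  assume l: "l \<in> Letters k"
  have "l ! i \<le> 1" if "i < k" for i
  proof -
    have "l ! i \<in> set l" using l that by (simp add: Letters_def)
    then show ?thesis using l by (auto simp: Letters_def)
  qed
  then show ?thesis using l unfolding good_def Letters_def track_def by (simp add: fib_word_Cons)
qed

lemma good_Cons: "good k (l # w) \<longleftrightarrow> good k [l] \<and> good k w \<and>
   (\<forall>i<k. \<not> (w \<noteq> [] \<and> l ! i = 1 \<and> hd w ! i = 1))"
  using good_append[of k "[l]" w] by simp

lemma rq_Good_last: "good k u \<Longrightarrow> u \<noteq> [] \<Longrightarrow> rq (Good k) u = rq (Good k) [last u]"
proof -
  assume g: "good k u" and ne: "u \<noteq> []"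
  have "good k [last u]" using good_single good_last_letter g ne by blast
  then show ?thesis unfolding rq_def Good_def using g ne good_append[of k u] good_append[of k "[last u]"]
    by auto
qed

lemma finite_Letters: "finite (Letters k)"
  unfolding Letters_def by (rule finite_lists_length_eq) simp
lemma card_Letters: "card (Letters k) = 2 ^ k"
  unfolding Letters_def by (subst card_lists_length_eq) (auto simp: numeral_2_eq_2)

lemma reg_by_state:
  assumes "\<And>u. good k u \<Longrightarrow> rq L u = g (st u) \<and> st u \<in> B" "finite B"
  shows "reg k L (card B)"
proof -
  have "cls k L \<subseteq> g ` B" unfolding cls_def using assms(1) by auto
  moreover have "finite (g ` B)" using assms(2) by simp
  ultimately have "finite (cls k L)" "card (cls k L) \<le> card (g ` B)"
    by (auto intro: finite_subset card_mono)
  moreover have "card (g ` B) \<le> card B" using assms(2) by (rule card_image_le)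
  ultimately show ?thesis unfolding reg_def by simp
qed

lemma reg_mono: "reg k L N \<Longrightarrow> N \<le> M \<Longrightarrow> reg k L M"
  by (simp add: reg_def)

lemma reg_Good: "reg k (Good k) (2 ^ k + 1)"
proof -
  let ?st = "\<lambda>u::word. if u = [] then None else Some (last u)"
  let ?g = "\<lambda>x. case x of None \<Rightarrow> rq (Good k) [] | Some l \<Rightarrow> rq (Good k) [l]"
  have "reg k (Good k) (card (insert None (Some ` Letters k)))"
    by (rule reg_by_state[where g="?g" and st="?st"])
       (auto simp: rq_Good_last good_last_letter finite_Letters)
  moreover have "card (insert None (Some ` Letters k)) = 2 ^ k + 1"
    by (simp add: card_image finite_Letters card_Letters)
  ultimately show ?thesis by simp
qed

lemma reg_card: "reg k L N \<Longrightarrow> finite (cls k L) \<and> card (cls k L) \<le> N" by (simp add: reg_def)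

lemma rq_in_cls: "good k u \<Longrightarrow> rq L u \<in> cls k L" by (simp add: cls_def)

lemma rq_diff: "rq (A - B) u = rq A u - rq B u" by (auto simp: rq_def)
lemma rq_int: "rq (A \<inter> B) u = rq A u \<inter> rq B u" by (auto simp: rq_def)

lemma reg_diff: "reg k L1 N1 \<Longrightarrow> reg k L2 N2 \<Longrightarrow> reg k (L1 - L2) (N1 * N2)"
proof -
  assume r1: "reg k L1 N1" and r2: "reg k L2 N2"
  have "reg k (L1 - L2) (card (cls k L1 \<times> cls k L2))"
    by (rule reg_by_state[where g="\<lambda>(a,b). a - b" and st="\<lambda>u. (rq L1 u, rq L2 u)"])
       (use r1 r2 in \<open>auto simp: rq_diff rq_int rq_in_cls reg_def\<close>)
  moreover have "card (cls k L1 \<times> cls k L2) \<le> N1 * N2"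
    using r1 r2 by (simp add: card_cartesian_product reg_def mult_le_mono)
  ultimately show ?thesis by (rule reg_mono)
qed

lemma reg_int: "reg k L1 N1 \<Longrightarrow> reg k L2 N2 \<Longrightarrow> reg k (L1 \<inter> L2) (N1 * N2)"
proof -
  assume r1: "reg k L1 N1" and r2: "reg k L2 N2"
  have "reg k (L1 \<inter> L2) (card (cls k L1 \<times> cls k L2))"
    by (rule reg_by_state[where g="\<lambda>(a,b). a \<inter> b" and st="\<lambda>u. (rq L1 u, rq L2 u)"])
       (use r1 r2 in \<open>auto simp: rq_diff rq_int rq_in_cls reg_def\<close>)
  moreover have "card (cls k L1 \<times> cls k L2) \<le> N1 * N2"
    using r1 r2 by (simp add: card_cartesian_product reg_def mult_le_mono)
  ultimately show ?thesis by (rule reg_mono)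
qed


definition Z :: "nat \<Rightarrow> nat \<Rightarrow> word" where "Z k j = replicate j (replicate k 0)"

lemma length_Z[simp]: "length (Z k j) = j" by (simp add: Z_def)
lemma track_Z[simp]: "i < k \<Longrightarrow> track i (Z k j) = replicate j 0" by (simp add: Z_def track_def)

lemma good_Z: "good k (Z k j @ w) \<longleftrightarrow> good k w"
proof -
  have gz: "good k (Z k j)" by (auto simp: good_def Z_def track_def fib_word_def)
  have "\<And>i. i < k \<Longrightarrow> Z k j \<noteq> [] \<Longrightarrow> last (Z k j) ! i = 0" by (simp add: Z_def)
  then show ?thesis using gz by (auto simp: good_append)
qed

lemma vals_Z[simp]: "vals k (Z k j @ w) = vals k w"
  by (simp add: vals_def)

lemma good_tl: "good (Suc k) v \<Longrightarrow> good k (map tl v)"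
proof -
  assume g: "good (Suc k) v"
  have t: "track i (map tl v) = track (Suc i) v" if "i < k" for i
    unfolding track_def using g that by (auto simp: good_def nth_tl)
  show ?thesis using g unfolding good_def by (auto simp: t)
qed

lemma track_tl: "good (Suc k) v \<Longrightarrow> i < k \<Longrightarrow> track i (map tl v) = track (Suc i) v"
  unfolding track_def good_def by (auto simp: nth_tl)

lemma vals_Suc: "good (Suc k) v \<Longrightarrow> vals (Suc k) v = fibval (track 0 v) # vals k (map tl v)"
proof -
  assume g: "good (Suc k) v"
  have "vals (Suc k) v = map (\<lambda>i. fibval (track i v)) (0 # map Suc [0..<k])"
    unfolding vals_def by (simp add: upt_conv_Cons map_Suc_upt del: upt_Suc)
  also have "\<dots> = fibval (track 0 v) # vals k (map tl v)"
    unfolding vals_def using track_tl[OF g] by simp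
  finally show ?thesis .
qed

definition PL :: "nat \<Rightarrow> word set \<Rightarrow> word set" where
  "PL k L = {w. good k w \<and> (\<exists>j v. v \<in> L \<and> map tl v = Z k j @ w)}"

lemma reg_proj:
  assumes LG: "L \<subseteq> Good (Suc k)" and r: "reg (Suc k) L N"
  shows "reg k (PL k L) (2 ^ N)"
proof -
  let ?st = "\<lambda>u. {rq L v1 | v1 j. good (Suc k) v1 \<and> map tl v1 = Z k j @ u}"
  let ?g = "\<lambda>S. {w. \<exists>q\<in>S. \<exists>v2\<in>q. map tl v2 = w}"
  have key: "rq (PL k L) u = ?g (?st u)" if gu: "good k u" for u
  proof
    show "rq (PL k L) u \<subseteq> ?g (?st u)"
    proof
      fix w assume "w \<in> rq (PL k L) u"
      then obtain j v where v: "v \<in> L" "map tl v = Z k j @ u @ w"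
        unfolding rq_def PL_def by auto
      define v1 where "v1 = take (j + length u) v"
      define v2 where "v2 = drop (j + length u) v"
      have "map tl v1 = Z k j @ u" unfolding v1_def using v(2) by (simp flip: take_map)
      moreover have "map tl v2 = w" unfolding v2_def using v(2) by (simp flip: drop_map)
      moreover have "good (Suc k) v1" unfolding v1_def using v LG by (auto simp: Good_def good_take)
      moreover have "v2 \<in> rq L v1" unfolding rq_def v1_def v2_def using v by simp
      ultimately show "w \<in> ?g (?st u)" by blast
    qed
  next
    show "?g (?st u) \<subseteq> rq (PL k L) u"
    proof
      fix w assume "w \<in> ?g (?st u)"
      then obtain v1 j v2 where v: "map tl v1 = Z k j @ u" "v1 @ v2 \<in> L" "map tl v2 = w"
        unfolding rq_def by blast
      have "map tl (v1 @ v2) = Z k j @ (u @ w)" using v by simp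
      moreover have "good k (map tl (v1 @ v2))" using v(2) LG good_tl[of k "v1 @ v2"] by (auto simp: Good_def simp del: map_append)
      ultimately have "good k (u @ w)" using good_Z by metis
      then show "w \<in> rq (PL k L) u"
        unfolding rq_def PL_def using v \<open>map tl (v1 @ v2) = Z k j @ (u @ w)\<close> by blast
    qed
  qed
  have "reg k (PL k L) (card (Pow (cls (Suc k) L)))"
  proof (rule reg_by_state[where g="?g" and st="?st"])
    fix u assume "good k u"
    then show "rq (PL k L) u = ?g (?st u) \<and> ?st u \<in> Pow (cls (Suc k) L)"
      using key by (auto simp: rq_in_cls)
  next
    show "finite (Pow (cls (Suc k) L))" using r by (simp add: reg_def)
  qed
  moreover have "card (Pow (cls (Suc k) L)) \<le> 2 ^ N"
    using r by (simp add: reg_def card_Pow power_increasing)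
  ultimately show ?thesis by (rule reg_mono)
qed

definition zipC :: "nat list \<Rightarrow> word \<Rightarrow> word" where "zipC xs ws = map2 (#) xs ws"

lemma zipC_props:
  assumes "length xs = length ws" "fib_word xs" "good k ws"
  shows "good (Suc k) (zipC xs ws)" "map tl (zipC xs ws) = ws" "track 0 (zipC xs ws) = xs"
proof -
  have "map (tl \<circ> (\<lambda>p. fst p # snd p)) (zip xs ws) = map snd (zip xs ws)" by (simp add: comp_def)
  then show mt: "map tl (zipC xs ws) = ws" using assms(1) by (simp add: zipC_def split_def)
  show t0: "track 0 (zipC xs ws) = xs" using assms(1) unfolding zipC_def track_def
    by (simp add: list_eq_iff_nth_eq)
  have len: "\<forall>l\<in>set (zipC xs ws). length l = Suc k"
    using assms(3) unfolding zipC_def good_def by (auto dest!: set_zip_rightD)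
  have "track (Suc i) (zipC xs ws) = track i ws" if "i < k" for i
    using assms(1) unfolding zipC_def track_def by (simp add: list_eq_iff_nth_eq)
  then show "good (Suc k) (zipC xs ws)"
    using len assms(2,3) t0 unfolding good_def by (auto simp: less_Suc_eq_0_disj)
qed

lemma mkv:
  assumes "good k w" "x < fib (j + length w + 2)"
  shows "\<exists>v. good (Suc k) v \<and> map tl v = Z k j @ w \<and> vals (Suc k) v = x # vals k w \<and> length v = j + length w"
proof -
  let ?xs = "rep (j + length w) x"
  have r: "fib_word ?xs" "fibval ?xs = x" using rep_ok[OF assms(2)] by auto
  have gw: "good k (Z k j @ w)" using assms(1) good_Z by simp
  have l: "length ?xs = length (Z k j @ w)" by simp
  note z = zipC_props[OF l r(1) gw]
  show ?thesis
    by (rule exI[of _ "zipC ?xs (Z k j @ w)"]) (use z r vals_Suc[OF z(1)] in \<open>simp add: zipC_def\<close>)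
qed

lemma proj_sem:
  assumes L: "L = {v. good (Suc k) v \<and> P (vals (Suc k) v)}"
  shows "PL k L = {w. good k w \<and> (\<exists>x. P (x # vals k w))}"
proof (intro set_eqI iffI)
  fix w assume "w \<in> PL k L"
  then obtain j v where "good k w" "v \<in> L" "map tl v = Z k j @ w" unfolding PL_def by auto
  then show "w \<in> {w. good k w \<and> (\<exists>x. P (x # vals k w))}" using L vals_Suc by auto
next
  fix w assume "w \<in> {w. good k w \<and> (\<exists>x. P (x # vals k w))}"
  then obtain x where w: "good k w" "P (x # vals k w)" by auto
  have "x < fib (x + length w + 2)" using n_lt_fib[of x] fib_mono[of "x+2" "x + length w + 2"] by simp
  then obtain v where v: "good (Suc k) v" "map tl v = Z k x @ w" "vals (Suc k) v = x # vals k w"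
    using mkv[OF w(1)] by blast
  have "v \<in> L" using L v w(2) by simp
  then show "w \<in> PL k L" using w(1) v(2) unfolding PL_def by blast
qed

lemma witness:
  assumes L: "L = {v. good (Suc k) v \<and> P (vals (Suc k) v)}" and r: "reg (Suc k) L N"
    and w: "good k w" and px: "P (x # vals k w)"
  shows "\<exists>x'<fib (length w + N + 2). P (x' # vals k w)"
proof -
  have "w \<in> PL k L" using proj_sem[OF L] w px by auto
  then have ex: "\<exists>j v. v \<in> L \<and> map tl v = Z k j @ w" unfolding PL_def by auto
  define j where "j = (LEAST j. \<exists>v. v \<in> L \<and> map tl v = Z k j @ w)"
  obtain v where v: "v \<in> L" "map tl v = Z k j @ w"
    using LeastI_ex[OF ex] unfolding j_def by blast
  have jmin: "\<And>j' v'. v' \<in> L \<Longrightarrow> map tl v' = Z k j' @ w \<Longrightarrow> j \<le> j'"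
    unfolding j_def by (rule Least_le) blast
  have gv: "good (Suc k) v" using v L by auto
  have lenv: "length v = j + length w" using arg_cong[OF v(2), of length] by simp
  have jN: "j < N"
  proof (rule ccontr)
    assume "\<not> j < N"
    let ?f = "\<lambda>i. rq L (take i v)"
    have "?f ` {0..j} \<subseteq> cls (Suc k) L" using gv by (auto simp: rq_in_cls good_take)
    moreover have "finite (cls (Suc k) L)" "card (cls (Suc k) L) \<le> N" using r by (auto simp: reg_def)
    ultimately have "\<not> inj_on ?f {0..j}"
      using card_inj_on_le[of ?f "{0..j}" "cls (Suc k) L"] \<open>\<not> j < N\<close> by auto
    then obtain i1 i2 where ii: "i1 \<le> j" "i2 \<le> j" "i1 < i2" "?f i1 = ?f i2"
      unfolding inj_on_def by (metis atLeastAtMost_iff linorder_neqE_nat le0)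
    define v' where "v' = take i1 v @ drop i2 v"
    have "drop i2 v \<in> ?f i2" using v(1) by (simp add: rq_def)
    then have "v' \<in> L" using ii(4) unfolding v'_def rq_def by auto
    moreover have "map tl v' = Z k (j - (i2 - i1)) @ w"
    proof -
      have "map tl v' = take i1 (Z k j @ w) @ drop i2 (Z k j @ w)"
        unfolding v'_def using v(2) by (simp flip: take_map drop_map)
      also have "\<dots> = Z k i1 @ Z k (j - i2) @ w" using ii by (simp add: Z_def)
      also have "\<dots> = Z k (j - (i2 - i1)) @ w" using ii by (simp add: Z_def replicate_add[symmetric])
      finally show ?thesis .
    qed
    ultimately have "j \<le> j - (i2 - i1)" by (rule jmin)
    then show False using ii by linarith
  qed
  define x' where "x' = fibval (track 0 v)"
  have "fib_word (track 0 v)" using gv by (simp add: good_def)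
  then have "x' < fib (length v + 2)" unfolding x'_def using fibval_lt by fastforce
  also have "\<dots> \<le> fib (length w + N + 2)" using lenv jN by (intro fib_mono) simp
  finally have "x' < fib (length w + N + 2)" .
  moreover have "P (x' # vals k w)" using v L vals_Suc[OF gv] unfolding x'_def by auto
  ultimately show ?thesis by blast
qed


lemma run_append: "run d q (a @ b) = run d (run d q a) b"
  by (induction a arbitrary: q) auto

lemma run_lt: "length d = 4 * Q \<Longrightarrow> \<forall>x\<in>set d. x < Q \<Longrightarrow> q < Q \<Longrightarrow> \<forall>c\<in>set cs. c < 4 \<Longrightarrow> run d q cs < Q"
proof (induction cs arbitrary: q)
  case (Cons c cs)
  have "4 * q + c < length d" using Cons.prems by simp
  then have "d ! (4 * q + c) < Q" using Cons.prems(2) nth_mem by blast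
  then show ?case using Cons by simp
qed simp

lemma pair_word_track: "pair_word (track i w) (track j w) = map (\<lambda>l. 2 * l ! i + l ! j) w"
  by (simp add: pair_word_def track_def list_eq_iff_nth_eq)

lemma card_cls_Good: "finite (cls k (Good k))" "card (cls k (Good k)) \<le> 2 ^ k + 1"
  using reg_Good[of k] by (auto simp: reg_def)

lemma reg_dfa:
  assumes sync: "synchronized (Q, q0, d, F) s" and ij: "i < k" "j < k"
  shows "reg k {w. good k w \<and> vals k w ! j = s (vals k w ! i)} ((2 ^ k + 1) * Q)"
proof -
  let ?cw = "\<lambda>w. map (\<lambda>l. 2 * l ! i + l ! j) w"
  have wf: "0 < Q" "q0 < Q" "length d = 4 * Q" "\<forall>x\<in>set d. x < Q"
    using sync by (auto simp: synchronized_def wf_dfa_def)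
  have sem: "vals k w ! j = s (vals k w ! i) \<longleftrightarrow> run d q0 (?cw w) \<in> set F" if g: "good k w" for w
  proof -
    have "fib_word (track i w)" "fib_word (track j w)" using g ij by (auto simp: good_def)
    then have "accepts (Q, q0, d, F) (pair_word (track i w) (track j w)) \<longleftrightarrow>
        fibval (track j w) = s (fibval (track i w))"
      using sync unfolding synchronized_def by auto
    then show ?thesis using ij by (simp add: pair_word_track accepts_def)
  qed
  have lt4: "\<forall>c\<in>set (?cw u). c < 4" if "good k u" for u
  proof
    fix c assume "c \<in> set (?cw u)"
    then obtain l where l: "l \<in> set u" "c = 2 * l ! i + l ! j" by auto
    have "l ! i \<le> 1" "l ! j \<le> 1" using good_digit[OF that l(1)] ij by auto
    then show "c < 4" using l by simp
  qed
  let ?L = "{w. good k w \<and> vals k w ! j = s (vals k w ! i)}"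
  let ?st = "\<lambda>u. (rq (Good k) u, run d q0 (?cw u))"
  let ?g = "\<lambda>(G, q). {w. w \<in> G \<and> run d q (?cw w) \<in> set F}"
  have "reg k ?L (card (cls k (Good k) \<times> {..<Q}))"
  proof (rule reg_by_state[where g="?g" and st="?st"])
    fix u assume gu: "good k u"
    have "rq ?L u = ?g (?st u)"
      unfolding rq_def Good_def using sem by (auto simp: run_append)
    moreover have "?st u \<in> cls k (Good k) \<times> {..<Q}"
      using gu rq_in_cls run_lt[OF wf(3) wf(4) wf(2) lt4[OF gu]] by auto
    ultimately show "rq ?L u = ?g (?st u) \<and> ?st u \<in> cls k (Good k) \<times> {..<Q}" by blast
  next
    show "finite (cls k (Good k) \<times> {..<Q})" using card_cls_Good by simp
  qed
  moreover have "card (cls k (Good k) \<times> {..<Q}) \<le> (2 ^ k + 1) * Q"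
    using mult_le_mono1[OF card_cls_Good(2)[of k], of Q] by (simp add: card_cartesian_product)
  ultimately show ?thesis by (rule reg_mono)
qed

definition cmp3 :: "nat \<Rightarrow> nat \<Rightarrow> nat" where
  "cmp3 a b = (if a < b then 0 else if a = b then 1 else 2)"

lemma reg_lt:
  assumes ij: "i < k" "j < k"
  shows "reg k {w. good k w \<and> vals k w ! i < vals k w ! j} ((2 ^ k + 1) * 3)"
proof -
  let ?L = "{w. good k w \<and> vals k w ! i < vals k w ! j}"
  let ?st = "\<lambda>u. (rq (Good k) u, cmp3 (fibval (track i u)) (fibval (track j u)))"
  let ?g = "\<lambda>(G, c). {w. w \<in> G \<and> (c = 0 \<or> (c = 1 \<and> fibval (track i w) < fibval (track j w)))}"
  have key: "rq ?L u = ?g (?st u)" if gu: "good k u" for u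
  proof -
    have "(fibval (track i (u @ w)) < fibval (track j (u @ w))) \<longleftrightarrow>
       (cmp3 (fibval (track i u)) (fibval (track j u)) = 0 \<or>
        (cmp3 (fibval (track i u)) (fibval (track j u)) = 1 \<and> fibval (track i w) < fibval (track j w)))"
      if g: "good k (u @ w)" for w
    proof -
      have f: "fib_word (track i u @ track i w)" "fib_word (track j u @ track j w)"
        using g ij by (auto simp: good_def)
      have fu: "fib_word (track i u)" "fib_word (track j u)" using gu ij by (auto simp: good_def)
      have eq: "track i u = track j u \<longleftrightarrow> fibval (track i u) = fibval (track j u)"
        using fibval_inj[of "track i u" "track j u"] fu by simp
      show ?thesis using fibval_lex[of "track i u" "track j u" "track i w" "track j w"] f eq
        by (auto simp: cmp3_def)
    qed
    then show ?thesis unfolding rq_def Good_def using ij by auto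
  qed
  have "reg k ?L (card (cls k (Good k) \<times> {..<3::nat}))"
  proof (rule reg_by_state[where g="?g" and st="?st"])
    fix u assume gu: "good k u"
    show "rq ?L u = ?g (?st u) \<and> ?st u \<in> cls k (Good k) \<times> {..<3}"
      using key[OF gu] gu rq_in_cls by (auto simp: cmp3_def)
  next
    show "finite (cls k (Good k) \<times> {..<3::nat})" using card_cls_Good by simp
  qed
  moreover have "card (cls k (Good k) \<times> {..<3::nat}) \<le> (2 ^ k + 1) * 3"
    using card_cls_Good(2)[of k] by (simp add: card_cartesian_product mult_le_mono1 del: add_mult_distrib)
  ultimately show ?thesis by (rule reg_mono)
qed


datatype form = FS nat nat | FS' nat nat | FLt nat nat | FNot form | FAnd form form | FEx form

fun holds :: "(nat \<Rightarrow> nat) \<Rightarrow> (nat \<Rightarrow> nat) \<Rightarrow> form \<Rightarrow> nat list \<Rightarrow> bool" where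
  "holds s s' (FS i j) env = (env ! j = s (env ! i))"
| "holds s s' (FS' i j) env = (env ! j = s' (env ! i))"
| "holds s s' (FLt i j) env = (env ! i < env ! j)"
| "holds s s' (FNot p) env = (\<not> holds s s' p env)"
| "holds s s' (FAnd p q) env = (holds s s' p env \<and> holds s s' q env)"
| "holds s s' (FEx p) env = (\<exists>x. holds s s' p (x # env))"

fun ok :: "nat \<Rightarrow> form \<Rightarrow> bool" where
  "ok k (FS i j) = (i < k \<and> j < k)"
| "ok k (FS' i j) = (i < k \<and> j < k)"
| "ok k (FLt i j) = (i < k \<and> j < k)"
| "ok k (FNot p) = ok k p"
| "ok k (FAnd p q) = (ok k p \<and> ok k q)"
| "ok k (FEx p) = ok (Suc k) p"

fun bnd :: "nat \<Rightarrow> nat \<Rightarrow> nat \<Rightarrow> form \<Rightarrow> nat" where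
  "bnd Q Q' k (FS i j) = (2 ^ k + 1) * Q"
| "bnd Q Q' k (FS' i j) = (2 ^ k + 1) * Q'"
| "bnd Q Q' k (FLt i j) = (2 ^ k + 1) * 3"
| "bnd Q Q' k (FNot p) = (2 ^ k + 1) * bnd Q Q' k p"
| "bnd Q Q' k (FAnd p q) = bnd Q Q' k p * bnd Q Q' k q"
| "bnd Q Q' k (FEx p) = 2 ^ bnd Q Q' (Suc k) p"

definition LF :: "(nat \<Rightarrow> nat) \<Rightarrow> (nat \<Rightarrow> nat) \<Rightarrow> nat \<Rightarrow> form \<Rightarrow> word set" where
  "LF s s' k p = {w. good k w \<and> holds s s' p (vals k w)}"

lemma reg_form:
  assumes sA: "synchronized (Q, q0, d, F) s" and sB: "synchronized (Q', q0', d', F') s'"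
  shows "ok k p \<Longrightarrow> reg k (LF s s' k p) (bnd Q Q' k p)"
proof (induction p arbitrary: k)
  case (FS i j)
  then show ?case using reg_dfa[OF sA, of i k j] by (simp add: LF_def)
next
  case (FS' i j)
  then show ?case using reg_dfa[OF sB, of i k j] by (simp add: LF_def)
next
  case (FLt i j)
  then show ?case using reg_lt[of i k j] by (simp add: LF_def)
next
  case (FNot p)
  have "LF s s' k (FNot p) = Good k - LF s s' k p" by (auto simp: LF_def Good_def)
  then show ?case using reg_diff[OF reg_Good FNot.IH] FNot.prems by simp
next
  case (FAnd p q)
  have "LF s s' k (FAnd p q) = LF s s' k p \<inter> LF s s' k q" by (auto simp: LF_def)
  then show ?case using reg_int[OF FAnd.IH(1) FAnd.IH(2)] FAnd.prems by simp
next
  case (FEx p)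
  have L: "LF s s' (Suc k) p = {v. good (Suc k) v \<and> holds s s' p (vals (Suc k) v)}" by (simp add: LF_def)
  have "LF s s' k (FEx p) = PL k (LF s s' (Suc k) p)"
    unfolding proj_sem[OF L] by (simp add: LF_def)
  moreover have "LF s s' (Suc k) p \<subseteq> Good (Suc k)" by (auto simp: LF_def Good_def)
  ultimately show ?case using reg_proj FEx by simp
qed

lemma mkword:
  assumes "\<forall>y\<in>set env. y < fib (m + 2)"
  shows "\<exists>w. good (length env) w \<and> vals (length env) w = env \<and> length w = m"
proof -
  define w where "w = map (\<lambda>t. map (\<lambda>y. rep m y ! t) env) [0..<m]"
  have tr: "track i w = rep m (env ! i)" if "i < length env" for i
  proof -
    have "track i w = map (\<lambda>t. rep m (env ! i) ! t) [0..<m]"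
      unfolding w_def track_def using that by simp
    also have "\<dots> = rep m (env ! i)" using map_nth[of "rep m (env ! i)"] by simp
    finally show ?thesis .
  qed
  have ok: "fib_word (rep m (env ! i)) \<and> fibval (rep m (env ! i)) = env ! i" if "i < length env" for i
  proof -
    have "env ! i < fib (m + 2)" using assms that by simp
    then show ?thesis using rep_ok[of "env ! i" m] by simp
  qed
  have "\<forall>l\<in>set w. length l = length env" by (auto simp: w_def)
  then have "good (length env) w" unfolding good_def using tr ok by simp
  moreover have "vals (length env) w = env"
  proof -
    have "vals (length env) w = map (\<lambda>i. env ! i) [0..<length env]"
      unfolding vals_def by (rule map_cong) (auto simp: tr ok)
    also have "\<dots> = env" by (rule map_nth)
    finally show ?thesis .
  qed
  moreover have "length w = m" by (simp add: w_def)
  ultimately show ?thesis by blast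
qed

fun holdsB :: "(nat \<Rightarrow> nat \<Rightarrow> bool) \<Rightarrow> (nat \<Rightarrow> nat \<Rightarrow> bool) \<Rightarrow> (nat \<Rightarrow> form \<Rightarrow> nat) \<Rightarrow> form \<Rightarrow> nat list \<Rightarrow> bool" where
  "holdsB tS tS' bd (FS i j) env = tS (env ! i) (env ! j)"
| "holdsB tS tS' bd (FS' i j) env = tS' (env ! i) (env ! j)"
| "holdsB tS tS' bd (FLt i j) env = (env ! i < env ! j)"
| "holdsB tS tS' bd (FNot p) env = (\<not> holdsB tS tS' bd p env)"
| "holdsB tS tS' bd (FAnd p q) env = (holdsB tS tS' bd p env \<and> holdsB tS tS' bd q env)"
| "holdsB tS tS' bd (FEx p) env = (\<exists>x < fib (sum_list env + bd (Suc (length env)) p + 2). holdsB tS tS' bd p (x # env))"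

lemma holdsB_eq:
  assumes sA: "synchronized (Q, q0, d, F) s" and sB: "synchronized (Q', q0', d', F') s'"
    and tS: "\<And>n x. tS n x \<longleftrightarrow> x = s n" and tS': "\<And>n x. tS' n x \<longleftrightarrow> x = s' n"
  shows "ok (length env) p \<Longrightarrow> holdsB tS tS' (bnd Q Q') p env \<longleftrightarrow> holds s s' p env"
proof (induction p arbitrary: env)
  case (FEx p)
  let ?k = "length env"
  have IH: "\<And>x. holdsB tS tS' (bnd Q Q') p (x # env) \<longleftrightarrow> holds s s' p (x # env)"
    using FEx by simp
  have "\<forall>y\<in>set env. y < fib (sum_list env + 2)"
  proof
    fix y assume "y \<in> set env"
    then have "y \<le> sum_list env" by (rule member_le_sum_list) simp
    moreover have "sum_list env < fib (sum_list env + 2)" by (rule n_lt_fib)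
    ultimately show "y < fib (sum_list env + 2)" by linarith
  qed
  then obtain w where w: "good ?k w" "vals ?k w = env" "length w = sum_list env"
    using mkword by blast
  have L: "LF s s' (Suc ?k) p = {v. good (Suc ?k) v \<and> holds s s' p (vals (Suc ?k) v)}" by (simp add: LF_def)
  have r: "reg (Suc ?k) (LF s s' (Suc ?k) p) (bnd Q Q' (Suc ?k) p)"
    using reg_form[OF sA sB] FEx.prems by simp
  show ?case
  proof
    assume "holdsB tS tS' (bnd Q Q') (FEx p) env"
    then show "holds s s' (FEx p) env" using IH by auto
  next
    assume "holds s s' (FEx p) env"
    then obtain x where "holds s s' p (x # env)" by auto
    then have "holds s s' p (x # vals ?k w)" using w by simp
    from witness[OF L r w(1) this] obtain x' where
      "x' < fib (length w + bnd Q Q' (Suc ?k) p + 2)" "holds s s' p (x' # vals ?k w)" by blast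
    then show "holdsB tS tS' (bnd Q Q') (FEx p) env" using IH w by auto
  qed
qed (auto simp: tS tS')


definition C1 where "C1 = FNot (FEx (FEx (FEx (FAnd (FLt 2 1) (FAnd (FS' 2 0) (FS' 1 0))))))"
definition C2 where "C2 = FNot (FEx (FNot (FEx (FEx (FAnd (FS' 1 0) (FS 2 0))))))"
definition C3 where "C3 = FNot (FEx (FNot (FEx (FEx (FAnd (FS 1 0) (FS' 2 0))))))"
definition C4 where "C4 = FNot (FEx (FEx (FEx (FEx
   (FAnd (FLt 3 2) (FAnd (FLt 0 1) (FAnd (FEx (FAnd (FS 2 0) (FS' 4 0)))
   (FAnd (FEx (FAnd (FS 1 0) (FS' 3 0)))
   (FAnd (FNot (FEx (FAnd (FLt 0 2) (FEx (FAnd (FS 1 0) (FS 3 0))))))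
    (FNot (FEx (FAnd (FLt 0 1) (FEx (FAnd (FS 1 0) (FS 2 0)))))))))))))))"
definition Phi where "Phi = FAnd C1 (FAnd C2 (FAnd C3 C4))"

lemma ok_Phi: "ok 0 Phi" by (simp add: Phi_def C1_def C2_def C3_def C4_def)

lemma holds_Phi: "holds s s' Phi [] \<longleftrightarrow>
   (\<forall>i j. i < j \<longrightarrow> s' i \<noteq> s' j) \<and> (\<forall>m. \<exists>i. s' i = s m) \<and> (\<forall>i. \<exists>m. s m = s' i) \<and>
   \<not> (\<exists>i j a b. i < j \<and> b < a \<and> s a = s' i \<and> s b = s' j \<and> (\<forall>k<a. s k \<noteq> s a) \<and> (\<forall>k<b. s k \<noteq> s b))"
  unfolding Phi_def C1_def C2_def C3_def C4_def by auto

lemma enum_unique: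
  fixes f :: "nat \<Rightarrow> nat"
  assumes sm: "strict_mono f" and rg: "range f = S" and inf: "infinite S"
  shows "enumerate S n = f n"
proof (induction n rule: less_induct)
  case (less n)
  have "enumerate S n \<in> S" using inf by (rule enumerate_in_set)
  then obtain m where m: "enumerate S n = f m" using rg by auto
  have "\<not> m < n"
  proof
    assume "m < n"
    then have "enumerate S m = f m" using less by simp
    then have "enumerate S m = enumerate S n" using m by simp
    then show False using \<open>m < n\<close> enumerate_mono[OF \<open>m < n\<close> inf] by simp
  qed
  then have ge: "f n \<le> enumerate S n" using m sm by (simp add: strict_mono_less_eq)
  have "f n \<in> S" using rg by auto
  then obtain m' where m': "enumerate S m' = f n" using enumerate_Ex[OF inf] by blast
  have "\<not> m' < n"
  proof
    assume "m' < n"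
    then have "f m' = f n" using less m' by simp
    then show False using \<open>m' < n\<close> sm by (simp add: strict_mono_eq)
  qed
  then have "n \<le> m'" by simp
  then have "enumerate S n \<le> enumerate S m'" using inf by simp
  then have "enumerate S n \<le> f n" using m' by simp
  then show ?case using ge by simp
qed

lemma dist_char: "is_distinctness_transform s s' \<longleftrightarrow>
   (\<forall>i j. i < j \<longrightarrow> s' i \<noteq> s' j) \<and> (\<forall>m. \<exists>i. s' i = s m) \<and> (\<forall>i. \<exists>m. s m = s' i) \<and>
   \<not> (\<exists>i j a b. i < j \<and> b < a \<and> s a = s' i \<and> s b = s' j \<and> (\<forall>k<a. s k \<noteq> s a) \<and> (\<forall>k<b. s k \<noteq> s b))"
  (is "?L \<longleftrightarrow> ?A \<and> ?B \<and> ?C \<and> ?D")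
proof
  assume L: ?L
  define D where "D = first_occ s"
  have inf: "infinite D" and eq: "\<And>n. s' n = s (enumerate D n)"
    using L unfolding is_distinctness_transform_def D_def by auto
  have inD: "enumerate D n \<in> D" for n using enumerate_in_set[OF inf] .
  have uniq: "a = b" if "a \<in> D" "b \<in> D" "s a = s b" for a b
    using that unfolding D_def first_occ_def by (cases a b rule: linorder_cases) auto
  have A: ?A
  proof (intro allI impI)
    fix i j :: nat assume "i < j"
    then have "enumerate D i < enumerate D j" using enumerate_mono inf by blast
    show "s' i \<noteq> s' j"
    proof
      assume "s' i = s' j"
      then have "s (enumerate D i) = s (enumerate D j)" by (simp add: eq)
      then have "enumerate D i = enumerate D j" using uniq inD by blast
      then show False using \<open>enumerate D i < enumerate D j\<close> by simp
    qed
  qed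
  have B: ?B
  proof
    fix m
    define d where "d = (LEAST k. s k = s m)"
    have sd: "s d = s m" unfolding d_def by (rule LeastI[of _ m]) simp
    have "d \<in> D" unfolding D_def first_occ_def using sd not_less_Least d_def by fastforce
    then obtain i where "enumerate D i = d" using enumerate_Ex[OF inf] by blast
    then show "\<exists>i. s' i = s m" using sd by (intro exI[of _ i]) (simp add: eq)
  qed
  have C: ?C using eq by metis
  have D: ?D
  proof
    assume "\<exists>i j a b. i < j \<and> b < a \<and> s a = s' i \<and> s b = s' j \<and> (\<forall>k<a. s k \<noteq> s a) \<and> (\<forall>k<b. s k \<noteq> s b)"
    then obtain i j a b where h: "i < j" "b < a" "s a = s' i" "s b = s' j" "\<forall>k<a. s k \<noteq> s a" "\<forall>k<b. s k \<noteq> s b"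
      by blast
    have "a \<in> D" "b \<in> D" using h unfolding D_def first_occ_def by auto
    then have "a = enumerate D i" "b = enumerate D j" using uniq inD eq h by auto
    then show False using h enumerate_mono[OF h(1) inf] by simp
  qed
  show "?A \<and> ?B \<and> ?C \<and> ?D" using A B C D by blast
next
  assume R: "?A \<and> ?B \<and> ?C \<and> ?D"
  then have A: ?A and B: ?B and C: ?C and D: ?D by auto
  define D' where "D' = first_occ s"
  define f where "f i = (LEAST m. s m = s' i)" for i
  have sf: "s (f i) = s' i" for i
  proof -
    obtain m where "s m = s' i" using C by blast
    then show ?thesis unfolding f_def by (rule LeastI)
  qed
  have fD: "f i \<in> D'" for i
    unfolding D'_def first_occ_def f_def using sf not_less_Least f_def by fastforce
  have fo: "\<forall>k<f i. s k \<noteq> s (f i)" for i using fD unfolding D'_def first_occ_def by auto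
  have sm: "strict_mono f"
  proof (rule strict_monoI)
    fix i j :: nat assume ij: "i < j"
    have ne: "f i \<noteq> f j"
    proof
      assume "f i = f j"
      then have "s' i = s' j" using sf by (metis)
      then show False using A ij by blast
    qed
    have "\<not> f j < f i"
    proof
      assume "f j < f i"
      then have "i < j \<and> f j < f i \<and> s (f i) = s' i \<and> s (f j) = s' j \<and> (\<forall>k<f i. s k \<noteq> s (f i)) \<and> (\<forall>k<f j. s k \<noteq> s (f j))"
        using ij sf fo by blast
      then show False using D by blast
    qed
    then show "f i < f j" using ne by simp
  qed
  have rg: "range f = D'"
  proof
    show "range f \<subseteq> D'" using fD by auto
    show "D' \<subseteq> range f"
    proof
      fix d assume d: "d \<in> D'"
      obtain i where i: "s' i = s d" using B by blast
      have "f i \<le> d" unfolding f_def using i by (simp add: Least_le)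
      moreover have "\<not> f i < d" using d sf i unfolding D'_def first_occ_def by auto
      ultimately have "f i = d" by simp
      then show "d \<in> range f" by auto
    qed
  qed
  have inf: "infinite D'"
    using range_inj_infinite[OF strict_mono_imp_inj_on[OF sm]] rg by simp
  have "enumerate D' n = f n" for n using enum_unique[OF sm rg inf] .
  then show ?L unfolding is_distinctness_transform_def using inf sf D'_def by auto
qed


definition cQ :: "nat \<Rightarrow> nat" where "cQ c = fst (prod_decode c)"
definition cq0 :: "nat \<Rightarrow> nat" where "cq0 c = fst (prod_decode (snd (prod_decode c)))"
definition cdl :: "nat \<Rightarrow> nat" where "cdl c = fst (prod_decode (snd (prod_decode (snd (prod_decode c)))))"
definition cFl :: "nat \<Rightarrow> nat" where "cFl c = snd (prod_decode (snd (prod_decode (snd (prod_decode c)))))"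

lemma code_parts: "cQ (code_dfa (Q, q0, d, F)) = Q" "cq0 (code_dfa (Q, q0, d, F)) = q0"
  "cdl (code_dfa (Q, q0, d, F)) = list_encode d" "cFl (code_dfa (Q, q0, d, F)) = list_encode F"
  by (simp_all add: code_dfa_def cQ_def cq0_def cdl_def cFl_def)

definition nthc :: "nat \<Rightarrow> nat \<Rightarrow> nat" where "nthc i c = hd_code ((tl_code ^^ i) c)"

fun remf :: "nat \<Rightarrow> nat \<Rightarrow> nat \<Rightarrow> nat" where
  "remf L n 0 = n"
| "remf L n (Suc t) = (if fib (L - t + 1) \<le> remf L n t then remf L n t - fib (L - t + 1) else remf L n t)"

definition digf :: "nat \<Rightarrow> nat \<Rightarrow> nat \<Rightarrow> nat" where
  "digf L n t = (if fib (L - t + 1) \<le> remf L n t then 1 else 0)"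

fun runf :: "nat \<Rightarrow> nat \<Rightarrow> nat \<Rightarrow> nat \<Rightarrow> nat \<Rightarrow> nat \<Rightarrow> nat" where
  "runf dc q0 L n x 0 = q0"
| "runf dc q0 L n x (Suc t) = nthc (4 * runf dc q0 L n x t + (2 * digf L n t + digf L x t)) dc"

definition acc_code :: "nat \<Rightarrow> nat \<Rightarrow> nat \<Rightarrow> bool" where
  "acc_code c n x = mem_code (runf (cdl c) (cq0 c) (n + x + 1) n x (n + x + 1)) (cFl c)"

lemma drop_rep: "t \<le> L \<Longrightarrow> drop t (rep L n) = rep (L - t) (remf L n t)"
proof (induction t)
  case (Suc t)
  define l where "l = L - Suc t"
  have l: "L - t = Suc l" using Suc.prems unfolding l_def by arith
  have "drop (Suc t) (rep L n) = tl (drop t (rep L n))" by (simp add: drop_Suc tl_drop)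
  also have "\<dots> = tl (rep (Suc l) (remf L n t))" using Suc l by simp
  also have "\<dots> = rep l (remf L n (Suc t))" using l by (simp add: numeral_eq_Suc)
  finally show ?case unfolding l_def .
qed simp

lemma nth_rep: "t < L \<Longrightarrow> rep L n ! t = digf L n t"
proof -
  assume t: "t < L"
  define l where "l = L - Suc t"
  have l: "L - t = Suc l" using t unfolding l_def by arith
  have "rep L n ! t = hd (drop t (rep L n))" using t by (simp add: hd_drop_conv_nth)
  also have "\<dots> = hd (rep (Suc l) (remf L n t))" using t l drop_rep[of t L n] by simp
  also have "\<dots> = digf L n t" unfolding digf_def using l by (simp add: numeral_eq_Suc)
  finally show ?thesis .
qed

lemma rep_digit: "t < L \<Longrightarrow> digf L n t \<le> 1" by (simp add: digf_def)

fun runI :: "nat list \<Rightarrow> nat \<Rightarrow> nat list \<Rightarrow> nat \<Rightarrow> nat" where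
  "runI d q w 0 = q"
| "runI d q w (Suc t) = d ! (4 * runI d q w t + w ! t)"

lemma run_runI: "t \<le> length w \<Longrightarrow> run d q w = run d (runI d q w t) (drop t w)"
proof (induction t)
  case (Suc t)
  then have "drop t w = w ! t # drop (Suc t) w" by (simp add: Cons_nth_drop_Suc)
  then show ?case using Suc by simp
qed simp

lemma acc_code_correct:
  assumes sync: "synchronized A s"
  shows "acc_code (code_dfa A) n x \<longleftrightarrow> x = s n"
proof -
  obtain Q q0 d F where A: "A = (Q, q0, d, F)" by (cases A) auto
  have wf: "q0 < Q" "length d = 4 * Q" "\<forall>y\<in>set d. y < Q"
    using sync A by (auto simp: synchronized_def wf_dfa_def)
  define L where "L = n + x + 1"
  have nL: "n < fib (L + 2)" "x < fib (L + 2)"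
    using n_lt_fib[of n] n_lt_fib[of x] fib_mono[of "n+2" "L+2"] fib_mono[of "x+2" "L+2"]
    unfolding L_def by linarith+
  define w where "w = pair_word (rep L n) (rep L x)"
  have lw: "length w = L" by (simp add: w_def pair_word_def)
  have wt: "w ! t = 2 * digf L n t + digf L x t" if "t < L" for t
    using that by (simp add: w_def pair_word_def nth_rep)
  have inv: "runI d q0 w t < Q \<and> runf (list_encode d) q0 L n x t = runI d q0 w t" if "t \<le> L" for t
    using that
  proof (induction t)
    case (Suc t)
    then have IH: "runI d q0 w t < Q" "runf (list_encode d) q0 L n x t = runI d q0 w t" by auto
    have "digf L n t \<le> 1" "digf L x t \<le> 1" by (simp_all add: digf_def)
    then have idx: "4 * runI d q0 w t + w ! t < length d" using wt[of t] Suc.prems IH wf by simp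
    then have "d ! (4 * runI d q0 w t + w ! t) < Q" using wf nth_mem by blast
    moreover have "nthc (4 * runI d q0 w t + (2 * digf L n t + digf L x t)) (list_encode d) = d ! (4 * runI d q0 w t + w ! t)"
      unfolding nthc_def using idx wt[of t] Suc.prems by (simp add: nth_code)
    ultimately show ?case using IH by simp
  qed (use wf in simp)
  have "run d q0 w = runI d q0 w L" using run_runI[of L w d q0] lw by simp
  then have "acc_code (code_dfa A) n x \<longleftrightarrow> accepts A w"
    unfolding acc_code_def A code_parts accepts_def L_def[symmetric]
    using inv[of L] by (simp add: mem_code_enc)
  also have "\<dots> \<longleftrightarrow> x = s n"
  proof -
    have "fib_word (rep L n)" "fibval (rep L n) = n" "fib_word (rep L x)" "fibval (rep L x) = x"
      using rep_ok[OF nL(1)] rep_ok[OF nL(2)] by auto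
    then show ?thesis using sync unfolding synchronized_def w_def by auto
  qed
  finally show ?thesis .
qed


definition cQE where "cQE c = pdfE c"
definition cq0E where "cq0E c = pdfE (pdsE c)"
definition cdE where "cdE c = pdfE (pdsE (pdsE c))"
definition cFE where "cFE c = pdsE (pdsE (pdsE c))"
lemma sem_cE[simp]: "sem (cQE c) env = cQ (sem c env)" "sem (cq0E c) env = cq0 (sem c env)"
  "sem (cdE c) env = cdl (sem c env)" "sem (cFE c) env = cFl (sem c env)"
  by (simp_all add: cQE_def cq0E_def cdE_def cFE_def cQ_def cq0_def cdl_def cFl_def)

definition remE where "remE L n t = Rec t n (iteE (leE (fibE (Add (Sub (lift2 L) (V 0)) (Cn 1))) (V 1))
   (Sub (V 1) (fibE (Add (Sub (lift2 L) (V 0)) (Cn 1)))) (V 1))"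
lemma sem_remE[simp]: "sem (remE L n t) env = remf (sem L env) (sem n env) (sem t env)"
proof -
  have "rec_nat (sem n env) (\<lambda>t acc. sem (iteE (leE (fibE (Add (Sub (lift2 L) (V 0)) (Cn 1))) (V 1))
     (Sub (V 1) (fibE (Add (Sub (lift2 L) (V 0)) (Cn 1)))) (V 1)) (t # acc # env)) m
     = remf (sem L env) (sem n env) m" for m
    by (induction m) auto
  then show ?thesis by (simp add: remE_def)
qed

definition digE where "digE L n t = leE (fibE (Add (Sub L t) (Cn 1))) (remE L n t)"
lemma sem_digE[simp]: "sem (digE L n t) env = digf (sem L env) (sem n env) (sem t env)"
  by (simp add: digE_def digf_def)

definition runE where "runE c L n x = Rec L (cq0E c)
   (nthE (Add (Mul (Cn 4) (V 1)) (Add (Mul (Cn 2) (digE (lift2 L) (lift2 n) (V 0))) (digE (lift2 L) (lift2 x) (V 0))))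
     (cdE (lift2 c)))"
lemma sem_runE[simp]: "sem (runE c L n x) env =
   runf (cdl (sem c env)) (cq0 (sem c env)) (sem L env) (sem n env) (sem x env) (sem L env)"
proof -
  have "rec_nat (cq0 (sem c env)) (\<lambda>t acc. sem
     (nthE (Add (Mul (Cn 4) (V 1)) (Add (Mul (Cn 2) (digE (lift2 L) (lift2 n) (V 0))) (digE (lift2 L) (lift2 x) (V 0))))
     (cdE (lift2 c))) (t # acc # env)) m
     = runf (cdl (sem c env)) (cq0 (sem c env)) (sem L env) (sem n env) (sem x env) m" for m
    by (induction m) (auto simp: sem_nthE nthc_def)
  then show ?thesis by (simp add: runE_def)
qed

definition accE where "accE c n x = memE (runE c (Add (Add n x) (Cn 1)) n x) (cFE c)"
lemma sem_accE[simp]: "sem (accE c n x) env = (if acc_code (sem c env) (sem n env) (sem x env) then 1 else 0)"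
  by (simp add: accE_def acc_code_def)

fun sumE :: "nat \<Rightarrow> pexp" where
  "sumE 0 = Cn 0"
| "sumE (Suc k) = Add (sumE k) (V k)"

lemma sem_sumE: "length ys = k \<Longrightarrow> sem (sumE k) (ys @ zs) = sum_list ys"
proof (induction k arbitrary: ys zs)
  case (Suc k)
  then obtain ys' y where ys: "ys = ys' @ [y]" by (metis length_Suc_conv_rev)
  then have "length ys' = k" using Suc by simp
  then show ?case using Suc.IH[of ys' "y # zs"] ys by (simp add: nth_append)
qed simp

fun bndE :: "pexp \<Rightarrow> pexp \<Rightarrow> nat \<Rightarrow> form \<Rightarrow> pexp" where
  "bndE qa qb k (FS i j) = Mul (Cn (2 ^ k + 1)) qa"
| "bndE qa qb k (FS' i j) = Mul (Cn (2 ^ k + 1)) qb"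
| "bndE qa qb k (FLt i j) = Cn ((2 ^ k + 1) * 3)"
| "bndE qa qb k (FNot p) = Mul (Cn (2 ^ k + 1)) (bndE qa qb k p)"
| "bndE qa qb k (FAnd p q) = Mul (bndE qa qb k p) (bndE qa qb k q)"
| "bndE qa qb k (FEx p) = pow2E (bndE qa qb (Suc k) p)"

lemma sem_bndE[simp]: "sem (bndE qa qb k p) env = bnd (sem qa env) (sem qb env) k p"
  by (induction qa qb k p rule: bndE.induct) auto

fun cf :: "nat \<Rightarrow> form \<Rightarrow> pexp" where
  "cf k (FS i j) = accE (V k) (V i) (V j)"
| "cf k (FS' i j) = accE (V (Suc k)) (V i) (V j)"
| "cf k (FLt i j) = leE (Add (V i) (Cn 1)) (V j)"
| "cf k (FNot p) = iszE (cf k p)"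
| "cf k (FAnd p q) = Mul (cf k p) (cf k q)"
| "cf k (FEx p) = bex (fibE (Add (Add (sumE k) (bndE (cQE (V k)) (cQE (V (Suc k))) (Suc k) p)) (Cn 2)))
     (cf (Suc k) p)"

lemma sem_cf: "ok k p \<Longrightarrow> length ys = k \<Longrightarrow>
   sem (cf k p) (ys @ [a, b]) = (if holdsB (acc_code a) (acc_code b) (bnd (cQ a) (cQ b)) p ys then 1 else 0)"
proof (induction k p arbitrary: ys rule: cf.induct)
  case (6 k p)
  have IH: "sem (cf (Suc k) p) (x # ys @ [a, b]) =
     (if holdsB (acc_code a) (acc_code b) (bnd (cQ a) (cQ b)) p (x # ys) then 1 else 0)" for x
    using "6.IH"[of "x # ys"] "6.prems" by simp
  have s: "sem (sumE k) (ys @ [a, b]) = sum_list ys" using 6 by (simp add: sem_sumE)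
  have ab: "(ys @ [a, b]) ! k = a" "(ys @ [a, b]) ! Suc k = b" using 6 by (auto simp: nth_append)
  show ?case using IH s ab 6(3) by (simp; blast)
qed (auto simp: nth_append)

theorem theorem18:
  shows "\<exists>f :: recf.
     (\<forall>a b. \<exists>r. eval f [a, b] r) \<and>
     (\<forall>A A' s s'. synchronized A s \<longrightarrow> synchronized A' s' \<longrightarrow>
        eval f [code_dfa A, code_dfa A']
          (if is_distinctness_transform s s' then 1 else 0))"
proof (rule exI[of _ "pcomp 2 (cf 0 Phi)"], intro conjI allI impI)
  let ?f = "pcomp 2 (cf 0 Phi)"
  fix a b show "\<exists>r. eval ?f [a, b] r" using pcomp_correct[of "[a, b]" 2 "cf 0 Phi"] by auto
next
  let ?f = "pcomp 2 (cf 0 Phi)"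
  fix A A' s s' assume sA: "synchronized A s" and sB: "synchronized A' s'"
  obtain Q q0 d F where A: "A = (Q, q0, d, F)" by (cases A) auto
  obtain Q' q0' d' F' where A': "A' = (Q', q0', d', F')" by (cases A') auto
  have e: "eval ?f [code_dfa A, code_dfa A'] (sem (cf 0 Phi) [code_dfa A, code_dfa A'])"
    using pcomp_correct[of "[code_dfa A, code_dfa A']" 2 "cf 0 Phi"] by simp
  have "sem (cf 0 Phi) ([] @ [code_dfa A, code_dfa A']) =
      (if holdsB (acc_code (code_dfa A)) (acc_code (code_dfa A')) (bnd (cQ (code_dfa A)) (cQ (code_dfa A'))) Phi [] then 1 else 0)"
    using sem_cf[OF ok_Phi, of "[]"] by simp
  also have "holdsB (acc_code (code_dfa A)) (acc_code (code_dfa A')) (bnd (cQ (code_dfa A)) (cQ (code_dfa A'))) Phi []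
      \<longleftrightarrow> holds s s' Phi []"
    unfolding A A' code_parts
    by (rule holdsB_eq[OF sA[unfolded A] sB[unfolded A']])
       (use acc_code_correct[OF sA] acc_code_correct[OF sB] ok_Phi A A' in auto)
  also have "holds s s' Phi [] \<longleftrightarrow> is_distinctness_transform s s'"
    by (simp add: holds_Phi dist_char)
  finally show "eval ?f [code_dfa A, code_dfa A'] (if is_distinctness_transform s s' then 1 else 0)"
    using e by simp
qed


end
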